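(* For every $\epsilon>0$ there exists $n_0$ such that for all $n\ge n_0$, $d_n \ge (1-\epsilon)\, n\, 2^{2^{n-1}}$.
   Context: A delta-matroid $(E,\mathcal F)$ consists of a finite ground set $E$ and a non-empty collection $\mathcal F$ of subsets of $E$ (the feasible sets) satisfying the symmetric exchange axiom: for all $X,Y\in\mathcal F$ and every $e\in X\triangle Y$ there exists $f\in X\triangle Y$ (possibly $f=e$) with $X\triangle\{e,f\}\in\mathcal F$. Let $d_n$ denote the number of labelled delta-matroids with ground set $[n]=\{1,\dots,n\}$, i.e. the number of collections $\mathcal F$ of subsets of $[n]$ such that $([n],\mathcal F)$ is a delta-matroid. *)

theory Defs
  imports Complex_Main
begin

definition symdiff :: "'a set \<Rightarrow> 'a set \<Rightarrow> 'a set" where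
  "symdiff A B = (A - B) \<union> (B - A)"

definition delta_matroid :: "'a set \<Rightarrow> 'a set set \<Rightarrow> bool" where
  "delta_matroid E F \<longleftrightarrow> finite E \<and> F \<noteq> {} \<and> (\<forall>X\<in>F. X \<subseteq> E) \<and>
     (\<forall>X\<in>F. \<forall>Y\<in>F. \<forall>e\<in>symdiff X Y. \<exists>f\<in>symdiff X Y. symdiff X {e, f} \<in> F)"

definition num_delta_matroids :: "nat \<Rightarrow> nat" where
  "num_delta_matroids n = card {F. F \<subseteq> Pow {1..n} \<and> delta_matroid {1..n} F}"

end

theory Submission
  imports Defs
begin


lemma sd_single: "symdiff S {x} = (if x \<in> S then S - {x} else insert x S)"
  by (auto simp: symdiff_def)

lemma flip1: "finite S \<Longrightarrow> even (card (symdiff S {x})) = odd (card S)"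
proof (cases "x \<in> S")
  case True
  assume f: "finite S"
  have c: "card (S - {x}) = card S - 1" using True f by (simp add: card_Diff_singleton)
  have "card S > 0" using True f card_gt_0_iff by blast
  then have "even (card S - 1) = odd (card S)" by (cases "card S") auto
  then show ?thesis using True c by (simp add: sd_single)
next
  case False
  assume "finite S" then show ?thesis using False by (simp add: sd_single)
qed

lemma sd_fin: "finite S \<Longrightarrow> finite (symdiff S T) = finite T"
  by (auto simp: symdiff_def)

lemma flip2: "finite S \<Longrightarrow> e \<noteq> f \<Longrightarrow> even (card (symdiff S {e,f})) = even (card S)"
proof -
  assume f: "finite S" "e \<noteq> f"
  have "symdiff S {e,f} = symdiff (symdiff S {e}) {f}" using f(2) by (auto simp: symdiff_def)
  moreover have "finite (symdiff S {e})" using f by (simp add: sd_fin)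
  ultimately show ?thesis using flip1[OF f(1), of e] flip1[of "symdiff S {e}" f] by simp
qed

lemma sd_back: "symdiff X (symdiff X Y) = Y" by (auto simp: symdiff_def)

lemma sd_invol: "symdiff (symdiff X {b}) {b} = X" by (auto simp: symdiff_def)

definition Cp :: "nat \<Rightarrow> nat \<Rightarrow> nat set set" where
  "Cp n a = {X. X \<subseteq> {1..n} \<and> even (card (X - {a}))}"
definition Dp :: "nat \<Rightarrow> nat \<Rightarrow> nat set set" where
  "Dp n a = {X. X \<subseteq> {1..n} \<and> odd (card (X - {a}))}"

lemma dm:
  assumes "Cp n a \<subseteq> F" "F \<subseteq> Pow {1..n}"
  shows "delta_matroid {1..n} F"
  unfolding delta_matroid_def
proof (intro conjI ballI)
  show "finite {1..n}" by simp
  show "F \<noteq> {}" using assms(1) by (auto simp: Cp_def)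
  show "X \<subseteq> {1..n}" if "X \<in> F" for X using that assms(2) by auto
next
  fix X Y e assume X: "X \<in> F" and Y: "Y \<in> F" and e: "e \<in> symdiff X Y"
  have XN: "X \<subseteq> {1..n}" "Y \<subseteq> {1..n}" using X Y assms(2) by auto
  have fX: "finite (X - {a})" using XN finite_subset by blast
  have subN: "symdiff X T \<subseteq> {1..n}" if "T \<subseteq> symdiff X Y" for T
    using that XN by (auto simp: symdiff_def)
  have inF: "symdiff X T \<in> F" if "T \<subseteq> symdiff X Y" "even (card (symdiff X T - {a}))" for T
    using assms(1) subN[OF that(1)] that(2) by (auto simp: Cp_def)
  show "\<exists>f\<in>symdiff X Y. symdiff X {e, f} \<in> F"
  proof (cases "even (card (X - {a}))")
    case False
    show ?thesis
    proof (cases "e = a")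
      case ea: False
      have "symdiff X {e} - {a} = symdiff (X - {a}) {e}" using ea by (auto simp: symdiff_def)
      then have "even (card (symdiff X {e} - {a}))" using flip1[OF fX, of e] False by simp
      then have "symdiff X {e} \<in> F" using inF[of "{e}"] e by auto
      then show ?thesis using e by (intro bexI[of _ e]) auto
    next
      case ea: True
      show ?thesis
      proof (cases "\<exists>f\<in>symdiff X Y. f \<noteq> a")
        case True
        then obtain f where f: "f \<in> symdiff X Y" "f \<noteq> a" by blast
        have "symdiff X {e,f} - {a} = symdiff (X - {a}) {f}" using ea f by (auto simp: symdiff_def)
        then have "even (card (symdiff X {e,f} - {a}))" using flip1[OF fX, of f] False by simp
        moreover have "{e,f} \<subseteq> symdiff X Y" using e f by auto
        ultimately have "symdiff X {e,f} \<in> F" using inF[of "{e,f}"] by blast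
        then show ?thesis using f(1) by (intro bexI[of _ f])
      next
        case no: False
        then have "symdiff X Y = {e}" using e ea by blast
        then have "symdiff X {e} = Y" by (metis sd_back)
        then show ?thesis using e Y by (intro bexI[of _ e]) auto
      qed
    qed
  next
    case evn: True
    show ?thesis
    proof (cases "e = a")
      case ea: True
      have "symdiff X {e,e} - {a} = X - {a}" using ea by (auto simp: symdiff_def)
      then have "symdiff X {e} \<in> F" using inF[of "{e}"] e evn by auto
      then show ?thesis using e by (intro bexI[of _ e]) auto
    next
      case ea: False
      show ?thesis
      proof (cases "\<exists>f\<in>symdiff X Y. f \<noteq> a \<and> f \<noteq> e")
        case True
        then obtain f where f: "f \<in> symdiff X Y" "f \<noteq> a" "f \<noteq> e" by blast
        have "symdiff X {e,f} - {a} = symdiff (X - {a}) {e,f}" using ea f by (auto simp: symdiff_def)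
        then have "even (card (symdiff X {e,f} - {a}))" using flip2[OF fX, of e f] evn f by simp
        moreover have "{e,f} \<subseteq> symdiff X Y" using e f by auto
        ultimately have "symdiff X {e,f} \<in> F" using inF[of "{e,f}"] by blast
        then show ?thesis using f(1) by (intro bexI[of _ f])
      next
        case no: False
        then have sub: "symdiff X Y \<subseteq> {e,a}" by blast
        show ?thesis
        proof (cases "a \<in> symdiff X Y")
          case True
          then have "symdiff X Y = {e,a}" using sub e by blast
          then have "symdiff X {e,a} = Y" by (metis sd_back)
          then show ?thesis using True Y by (intro bexI[of _ a]) auto
        next
          case False
          then have "symdiff X Y = {e}" using sub e by blast
          then have "symdiff X {e} = Y" by (metis sd_back)
          then show ?thesis using e Y by (intro bexI[of _ e]) auto
        qed
      qed
    qed
  qed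
qed



lemma card_between:
  assumes "finite P" "A \<subseteq> P"
  shows "card {F. A \<subseteq> F \<and> F \<subseteq> P} = 2 ^ card (P - A)"
proof -
  have eq: "{F. A \<subseteq> F \<and> F \<subseteq> P} = (\<lambda>H. A \<union> H) ` Pow (P - A)"
  proof
    show "{F. A \<subseteq> F \<and> F \<subseteq> P} \<subseteq> (\<lambda>H. A \<union> H) ` Pow (P - A)"
    proof
      fix F assume "F \<in> {F. A \<subseteq> F \<and> F \<subseteq> P}"
      then have "F = A \<union> (F - A)" "F - A \<in> Pow (P - A)" by auto
      then show "F \<in> (\<lambda>H. A \<union> H) ` Pow (P - A)" by blast
    qed
    show "(\<lambda>H. A \<union> H) ` Pow (P - A) \<subseteq> {F. A \<subseteq> F \<and> F \<subseteq> P}" using assms(2) by auto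
  qed
  have "inj_on (\<lambda>H. A \<union> H) (Pow (P - A))"
    by (rule inj_onI) blast
  then have "card ((\<lambda>H. A \<union> H) ` Pow (P - A)) = card (Pow (P - A))" by (rule card_image)
  also have "\<dots> = 2 ^ card (P - A)" using assms(1) by (simp add: card_Pow)
  finally show ?thesis using eq by simp
qed

lemma CD_un: "Cp n a \<union> Dp n a = Pow {1..n}" by (auto simp: Cp_def Dp_def)
lemma CD_int: "Cp n a \<inter> Dp n a = {}" by (auto simp: Cp_def Dp_def)
lemma P_minus_C: "Pow {1..n} - Cp n a = Dp n a" by (auto simp: Cp_def Dp_def)
lemma fin_C: "finite (Cp n a)" "finite (Dp n a)"
  by (rule finite_subset[of _ "Pow {1..n}"], auto simp: Cp_def Dp_def)+

lemma toggle_sub: "X \<subseteq> {1..n} \<Longrightarrow> b \<in> {1..n} \<Longrightarrow> symdiff X {b} \<subseteq> {1..n}"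
  by (auto simp: symdiff_def)

lemma toggle_other: "b \<noteq> a \<Longrightarrow> symdiff X {b} - {a} = symdiff (X - {a}) {b}"
  by (auto simp: symdiff_def)

lemma toggle_same: "symdiff X {a} - {a} = X - {a}"
  by (auto simp: symdiff_def)

lemma inj_toggle: "inj_on (\<lambda>X. symdiff X {b}) S"
  by (rule inj_onI) (metis sd_invol)

lemma fin_sub: "X \<subseteq> {1..(n::nat)} \<Longrightarrow> finite (X - {a})"
  using finite_subset by blast

lemma card_Dp:
  assumes a: "a \<in> {1..n}" and n: "2 \<le> n"
  shows "card (Dp n a) = 2 ^ (n - 1)"
proof -
  obtain b where b: "b \<in> {1..n}" "b \<noteq> a"
  proof (cases "a = 1")
    case True then show ?thesis using n that[of 2] by auto
  next
    case False then show ?thesis using n that[of 1] by auto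
  qed
  have m1: "(\<lambda>X. symdiff X {b}) ` Cp n a \<subseteq> Dp n a"
  proof
    fix Z assume "Z \<in> (\<lambda>X. symdiff X {b}) ` Cp n a"
    then obtain X where X: "X \<in> Cp n a" "Z = symdiff X {b}" by blast
    have "X \<subseteq> {1..n}" "even (card (X - {a}))" using X by (auto simp: Cp_def)
    then show "Z \<in> Dp n a" using X(2) toggle_sub[OF _ b(1)] toggle_other[OF b(2)] flip1[OF fin_sub]
      by (auto simp: Dp_def)
  qed
  have m2: "(\<lambda>X. symdiff X {b}) ` Dp n a \<subseteq> Cp n a"
  proof
    fix Z assume "Z \<in> (\<lambda>X. symdiff X {b}) ` Dp n a"
    then obtain X where X: "X \<in> Dp n a" "Z = symdiff X {b}" by blast
    have "X \<subseteq> {1..n}" "odd (card (X - {a}))" using X by (auto simp: Dp_def)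
    then show "Z \<in> Cp n a" using X(2) toggle_sub[OF _ b(1)] toggle_other[OF b(2)] flip1[OF fin_sub]
      by (auto simp: Cp_def)
  qed
  have "card (Cp n a) \<le> card (Dp n a)" by (rule card_inj_on_le[OF inj_toggle m1 fin_C(2)])
  moreover have "card (Dp n a) \<le> card (Cp n a)" by (rule card_inj_on_le[OF inj_toggle m2 fin_C(1)])
  moreover have "card (Cp n a) + card (Dp n a) = 2 ^ n"
    using card_Un_disjoint[OF fin_C(1) fin_C(2) CD_int, of n a] CD_un[of n a] by (simp add: card_Pow)
  moreover have "(2::nat) ^ n = 2 * 2 ^ (n - 1)" using n by (metis Suc_diff_1 less_le_trans pos2 power_Suc zero_less_Suc)
  ultimately show ?thesis by linarith
qed

lemma card_DD:
  assumes a: "a \<in> {1..n}" and ab: "a \<noteq> b"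
  shows "2 * card (Dp n a \<inter> Dp n b) \<le> card (Dp n a)"
proof -
  have ba: "b \<noteq> a" using ab by simp
  have m: "(\<lambda>X. symdiff X {a}) ` (Dp n a \<inter> Dp n b) \<subseteq> Dp n a \<inter> Cp n b"
  proof
    fix Z assume "Z \<in> (\<lambda>X. symdiff X {a}) ` (Dp n a \<inter> Dp n b)"
    then obtain X where X: "X \<in> Dp n a" "X \<in> Dp n b" "Z = symdiff X {a}" by blast
    have "X \<subseteq> {1..n}" "odd (card (X - {a}))" "odd (card (X - {b}))" using X by (auto simp: Dp_def)
    note h = this
    have "Z \<subseteq> {1..n}" using X(3) toggle_sub[OF h(1) a] by simp
    moreover have "Z - {a} = X - {a}" using X(3) toggle_same by simp
    moreover have "Z - {b} = symdiff (X - {b}) {a}" using X(3) toggle_other[OF ab] by simp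
    moreover have "even (card (symdiff (X - {b}) {a}))" using flip1[OF fin_sub[OF h(1)]] h(3) by simp
    ultimately show "Z \<in> Dp n a \<inter> Cp n b" using h by (simp add: Cp_def Dp_def)
  qed
  have fin: "finite (Dp n a \<inter> Cp n b)" using fin_C by blast
  have "card (Dp n a \<inter> Dp n b) \<le> card (Dp n a \<inter> Cp n b)" by (rule card_inj_on_le[OF inj_toggle m fin])
  moreover have "card (Dp n a \<inter> Dp n b) + card (Dp n a \<inter> Cp n b) \<le> card (Dp n a)"
  proof -
    have "card (Dp n a \<inter> Dp n b) + card (Dp n a \<inter> Cp n b) = card ((Dp n a \<inter> Dp n b) \<union> (Dp n a \<inter> Cp n b))"
      by (rule card_Un_disjoint[symmetric]) (use fin_C CD_int in blast)+
    also have "\<dots> \<le> card (Dp n a)" by (rule card_mono[OF fin_C(2)]) blast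
    finally show ?thesis .
  qed
  ultimately show ?thesis by linarith
qed



lemma count_lb:
  assumes n: "2 \<le> n"
  shows "real (num_delta_matroids n) \<ge> real n * (2 ^ (2 ^ (n - 1)) - real (n - 1) * 2 ^ (2 ^ (n - 2)))"
proof -
  define N where "N = {1..n}"
  define P where "P = Pow N"
  define Fam where "Fam a = {F. Cp n a \<subseteq> F \<and> F \<subseteq> P}" for a
  define DM where "DM = {F. F \<subseteq> Pow {1..n} \<and> delta_matroid {1..n} F}"
  define A where "A a = Fam a - (\<Union>b\<in>N-{a}. Fam b)" for a
  define D :: nat where "D = 2 ^ (n - 1)"
  define K :: nat where "K = 2 ^ (n - 2)"
  have finP: "finite P" unfolding P_def N_def by simp
  have CP: "Cp n a \<subseteq> P" for a unfolding P_def N_def Cp_def by auto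
  have finFam: "finite (Fam a)" for a
    by (rule finite_subset[of _ "Pow P"]) (auto simp: Fam_def finP)
  have cardFam: "card (Fam a) = 2 ^ card (Dp n a)" for a
    unfolding Fam_def using card_between[OF finP CP[of a]] P_minus_C[of n a] by (simp add: P_def N_def)
  have cardFF: "card (Fam a \<inter> Fam b) \<le> 2 ^ K" if a: "a \<in> N" and ab: "a \<noteq> b" for a b
  proof -
    have eq: "Fam a \<inter> Fam b = {F. Cp n a \<union> Cp n b \<subseteq> F \<and> F \<subseteq> P}" unfolding Fam_def by auto
    have "P - (Cp n a \<union> Cp n b) = Dp n a \<inter> Dp n b" using P_minus_C[of n a] P_minus_C[of n b]
      unfolding P_def N_def by blast
    then have "card (Fam a \<inter> Fam b) = 2 ^ card (Dp n a \<inter> Dp n b)"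
      using eq card_between[OF finP, of "Cp n a \<union> Cp n b"] CP by simp
    moreover have "card (Dp n a \<inter> Dp n b) \<le> K"
    proof -
      have "2 * card (Dp n a \<inter> Dp n b) \<le> 2 ^ (n - 1)"
        using card_DD[OF a[unfolded N_def] ab] card_Dp[OF a[unfolded N_def] n] by simp
      moreover have "n - 1 = Suc (n - 2)" using n by simp
      then have "(2::nat) ^ (n - 1) = 2 * K" unfolding K_def by simp
      ultimately show ?thesis by linarith
    qed
    ultimately show ?thesis by (simp add: power_increasing)
  qed
  have cardA: "real (card (A a)) \<ge> 2 ^ D - real (n - 1) * 2 ^ K" if a: "a \<in> N" for a
  proof -
    define U where "U = (\<Union>b\<in>N-{a}. Fam a \<inter> Fam b)"
    have AU: "A a = Fam a - U" unfolding A_def U_def by blast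
    have finU: "finite U" unfolding U_def N_def using finFam by auto
    have "card (Fam a) - card U \<le> card (A a)" unfolding AU by (rule diff_card_le_card_Diff[OF finU])
    then have r1: "real (card (A a)) \<ge> real (card (Fam a)) - real (card U)" by linarith
    have "card U \<le> (\<Sum>b\<in>N-{a}. card (Fam a \<inter> Fam b))" unfolding U_def
      by (rule card_UN_le) (simp add: N_def)
    also have "\<dots> \<le> (\<Sum>b\<in>N-{a}. 2 ^ K)" by (rule sum_mono) (use cardFF a in auto)
    also have "\<dots> = (n - 1) * 2 ^ K" using a by (simp add: N_def)
    finally have "real (card U) \<le> real (n - 1) * 2 ^ K" by (metis of_nat_le_iff of_nat_mult of_nat_numeral of_nat_power)
    moreover have "card (Fam a) = 2 ^ D" using cardFam card_Dp[OF a[unfolded N_def] n] D_def by simp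
    ultimately show ?thesis using r1 by simp
  qed
  have sub: "(\<Union>a\<in>N. A a) \<subseteq> DM"
  proof
    fix F assume "F \<in> (\<Union>a\<in>N. A a)"
    then obtain a where "F \<in> Fam a" unfolding A_def by blast
    then have "Cp n a \<subseteq> F" "F \<subseteq> Pow {1..n}" unfolding Fam_def P_def N_def by auto
    then show "F \<in> DM" unfolding DM_def using dm by blast
  qed
  have finDM: "finite DM" by (rule finite_subset[of _ "Pow (Pow {1..n})"]) (auto simp: DM_def)
  have disj: "\<forall>a\<in>N. \<forall>b\<in>N. a \<noteq> b \<longrightarrow> A a \<inter> A b = {}" unfolding A_def by blast
  have finA: "\<forall>a\<in>N. finite (A a)" unfolding A_def using finFam by auto
  have "card (\<Union>a\<in>N. A a) = (\<Sum>a\<in>N. card (A a))"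
    by (rule card_UN_disjoint) (use disj finA in \<open>auto simp: N_def\<close>)
  then have "real (card (\<Union>a\<in>N. A a)) = (\<Sum>a\<in>N. real (card (A a)))" by simp
  also have "\<dots> \<ge> (\<Sum>a\<in>N. 2 ^ D - real (n - 1) * 2 ^ K)" by (rule sum_mono) (use cardA in auto)
  finally have "real (card (\<Union>a\<in>N. A a)) \<ge> real n * (2 ^ D - real (n - 1) * 2 ^ K)" using n by (simp add: N_def of_nat_diff)
  moreover have "card (\<Union>a\<in>N. A a) \<le> card DM" by (rule card_mono[OF finDM sub])
  ultimately show ?thesis unfolding num_delta_matroids_def DM_def[symmetric] D_def K_def
    by (smt (verit) of_nat_le_iff)
qed



lemma exp_lin: "4 \<le> m \<Longrightarrow> 2 * m \<le> (2::nat) ^ (m - 1)"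
proof (induction m rule: dec_induct)
  case base then show ?case by simp
next
  case (step m)
  then have "m - 1 + 1 = m" by simp
  have "2 * Suc m \<le> 2 * 2 ^ (m - 1)" using step by simp
  also have "\<dots> = 2 ^ (Suc m - 1)" using step(1) by (simp add: power_Suc[symmetric])
  finally show ?case .
qed

lemma key_bound:
  assumes m: "4 \<le> m" and e: "\<epsilon> > 0" "real m * \<epsilon> \<ge> 1"
  shows "real m \<le> \<epsilon> * 2 ^ (2 ^ (m - 1))"
proof -
  have "2 * m \<le> 2 ^ (m - 1)" by (rule exp_lin[OF m])
  then have "(2::nat) ^ (2 * m) \<le> 2 ^ (2 ^ (m - 1))" by (rule power_increasing) simp
  moreover have "m * m \<le> (2::nat) ^ (2 * m)"
  proof -
    have "m \<le> 2 ^ m" using less_exp[of m] by simp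
    then have "m * m \<le> 2 ^ m * 2 ^ m" by (rule mult_mono) auto
    then show ?thesis by (simp add: power_add[symmetric] mult_2)
  qed
  ultimately have "m * m \<le> (2::nat) ^ (2 ^ (m - 1))" by linarith
  then have r: "real m * real m \<le> 2 ^ (2 ^ (m - 1))" by (metis of_nat_le_iff of_nat_mult of_nat_numeral of_nat_power)
  have "real m = real m * 1" by simp
  also have "\<dots> \<le> real m * (real m * \<epsilon>)" using e by (intro mult_left_mono) auto
  also have "\<dots> = \<epsilon> * (real m * real m)" by simp
  also have "\<dots> \<le> \<epsilon> * 2 ^ (2 ^ (m - 1))" using r e by (intro mult_left_mono) auto
  finally show ?thesis .
qed

theorem theorem2:
  fixes \<epsilon> :: real
  assumes "\<epsilon> > 0"
  shows "\<exists>n0::nat. \<forall>n\<ge>n0.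
           real (num_delta_matroids n) \<ge> (1 - \<epsilon>) * real n * 2 ^ (2 ^ (n - 1))"
proof (intro exI allI impI)
  fix n :: nat
  assume n: "5 + nat \<lceil>1 / \<epsilon>\<rceil> \<le> n"
  define m where "m = n - 1"
  define K :: nat where "K = 2 ^ (n - 2)"
  have m4: "4 \<le> m" using n unfolding m_def by linarith
  have "real (nat \<lceil>1 / \<epsilon>\<rceil>) \<ge> 1 / \<epsilon>" by linarith
  then have "real m \<ge> 1 / \<epsilon>" using n unfolding m_def by linarith
  then have me: "real m * \<epsilon> \<ge> 1" using assms by (simp add: field_simps)
  have Km: "m - 1 = n - 2" unfolding m_def by simp
  have kb: "real m \<le> \<epsilon> * 2 ^ K" using key_bound[OF m4 assms me] Km K_def by simp
  have D: "(2::real) ^ (2 ^ (n - 1)) = 2 ^ K * 2 ^ K"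
  proof -
    have "n - 1 = Suc (n - 2)" using n by simp
    then have "(2::nat) ^ (n - 1) = K + K" unfolding K_def by simp
    then show ?thesis by (simp add: power_add)
  qed
  have lb: "real (num_delta_matroids n) \<ge> real n * (2 ^ (2 ^ (n - 1)) - real m * 2 ^ K)"
    using count_lb[of n] n unfolding m_def K_def by simp
  have "real n * (real m * 2 ^ K) \<le> real n * (\<epsilon> * 2 ^ K * 2 ^ K)"
    using kb by (intro mult_left_mono) (auto simp: mult_right_mono)
  then show "(1 - \<epsilon>) * real n * 2 ^ (2 ^ (n - 1)) \<le> real (num_delta_matroids n)"
    using lb unfolding D by (simp add: algebra_simps)
qed


end
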